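(* Let $n\ge3$ be an odd integer. For $1\le r\le n-1$ let $S^r_n=\{(k,a,b)\in(\mathbb{R}\setminus A_n)\times\mathbb{R}\times\mathbb{R}: k\neq0,\ \mathrm{rank}(A^{(k,a,b)}_n)\le r,\ 4a^3+27b^2=0\}\setminus\{(k,0,0):k\in\mathbb{R}\}$. Then (a) $S^{n-1}_n=\{(k,a^{(n)}_{k,1},b^{(n)}_{k,1}): k\in\mathbb{R}\setminus A_n\}$; (b) the matrix $A^{(k,a,b)}_n$ has rank exactly $n-1$ for all but finitely many triples $(k,a,b)\in S^{n-1}_n$; (c) for each $1\le r\le n-2$, the matrix $A^{(k,a,b)}_n$ has rank $r$ for only finitely many triples $(k,a,b)\in S^{n-1}_n$.
   Context: For real $k,a,b$, the generalized $k$-FL sequence is $S^{(a,b)}_{k,0}=2b$, $S^{(a,b)}_{k,1}=bk+a$, $S^{(a,b)}_{k,m}=kS^{(a,b)}_{k,m-1}+S^{(a,b)}_{k,m-2}$. $A^{(k,a,b)}_n$ is the $n\times n$ skew circulant matrix whose $(i,j)$ entry is $S^{(a,b)}_{k,j-i+1}$ if $j\ge i$ and $-S^{(a,b)}_{k,n+j-i+1}$ if $j<i$. Define $f_m,g_m\in\mathbb{Z}[T]$ by $f_0=0,f_1=1,g_0=2,g_1=T$, $f_m=Tf_{m-1}+f_{m-2}$, $g_m=Tg_{m-1}+g_{m-2}$; $F_n=f_{n+1}-f_n$, $G_n=g_{n+1}-g_n$; $A_n=\{k\in\mathbb{R}: F_n(k)+1=0\text{ or }G_n(k)+k-2=0\}$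 (for odd $n$, $0\in A_n$). For $k\notin A_n$, the singular $k$-FL pair of level $n$ of Type 1 is $a^{(n)}_{k,1}=-\frac{27(F_n(k)+1)^2}{4(G_n(k)+k-2)^2}$, $b^{(n)}_{k,1}=\frac{27(F_n(k)+1)^3}{4(G_n(k)+k-2)^3}$. The condition $4a^3+27b^2=0$ means the curve $y^2=x^3+ax+b$ is singular. *)

theory Defs
  imports "Jordan_Normal_Form.DL_Rank" "HOL-Computational_Algebra.Polynomial"
begin

fun kFL :: "real \<Rightarrow> real \<Rightarrow> real \<Rightarrow> nat \<Rightarrow> real" where
  "kFL k a b 0 = 2 * b"
| "kFL k a b (Suc 0) = b * k + a"
| "kFL k a b (Suc (Suc m)) = k * kFL k a b (Suc m) + kFL k a b m"

text \<open>The n x n skew circulant matrix A^(k,a,b)_n (0-based indices i,j; the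
 paper's (i+1,j+1) entry).\<close>
definition skewA :: "nat \<Rightarrow> real \<Rightarrow> real \<Rightarrow> real \<Rightarrow> real mat" where
  "skewA n k a b = mat n n (\<lambda>(i,j). if i \<le> j then kFL k a b (j - i + 1)
                                     else - kFL k a b (n + j - i + 1))"

definition matrank :: "nat \<Rightarrow> real mat \<Rightarrow> nat" where
  "matrank n M = vec_space.rank n M"

fun fpol :: "nat \<Rightarrow> int poly" where
  "fpol 0 = 0"
| "fpol (Suc 0) = 1"
| "fpol (Suc (Suc m)) = [:0, 1:] * fpol (Suc m) + fpol m"

fun gpol :: "nat \<Rightarrow> int poly" where
  "gpol 0 = [:2:]"
| "gpol (Suc 0) = [:0, 1:]"
| "gpol (Suc (Suc m)) = [:0, 1:] * gpol (Suc m) + gpol m"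

definition Fpol :: "nat \<Rightarrow> int poly" where "Fpol n = fpol (Suc n) - fpol n"
definition Gpol :: "nat \<Rightarrow> int poly" where "Gpol n = gpol (Suc n) - gpol n"

definition Fn :: "nat \<Rightarrow> real \<Rightarrow> real" where "Fn n k = poly (map_poly of_int (Fpol n)) k"
definition Gn :: "nat \<Rightarrow> real \<Rightarrow> real" where "Gn n k = poly (map_poly of_int (Gpol n)) k"

definition An :: "nat \<Rightarrow> real set" where
  "An n = {k. Fn n k + 1 = 0 \<or> Gn n k + k - 2 = 0}"

definition a1 :: "nat \<Rightarrow> real \<Rightarrow> real" where
  "a1 n k = - (27 * (Fn n k + 1)^2) / (4 * (Gn n k + k - 2)^2)"
definition b1 :: "nat \<Rightarrow> real \<Rightarrow> real" where
  "b1 n k = (27 * (Fn n k + 1)^3) / (4 * (Gn n k + k - 2)^3)"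

definition Sset :: "nat \<Rightarrow> nat \<Rightarrow> (real \<times> real \<times> real) set" where
  "Sset n r = {(k,a,b). k \<notin> An n \<and> k \<noteq> 0 \<and> matrank n (skewA n k a b) \<le> r
                \<and> 4 * a^3 + 27 * b^2 = 0} - {(k,0,0) | k. True}"

end

theory Submission
  imports Defs
begin


lemma mpi_add: "map_poly (of_int::int\<Rightarrow>real) (p + q) = map_poly of_int p + map_poly of_int q"
  by (rule poly_eqI) (simp add: coeff_map_poly)
lemma mpi_diff: "map_poly (of_int::int\<Rightarrow>real) (p - q) = map_poly of_int p - map_poly of_int q"
  by (rule poly_eqI) (simp add: coeff_map_poly)
lemma X_mult: "[:0,1:] * (p::int poly) = pCons 0 p" by (simp add: smult_1_left)
lemma pm_const: "poly (map_poly (of_int::int\<Rightarrow>real) [:c:]) x = of_int c"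
  by (subst map_poly_pCons) simp_all
lemma pm_X: "poly (map_poly (of_int::int\<Rightarrow>real) [:0,1:]) x = x"
  by (subst map_poly_pCons, simp, subst map_poly_pCons, simp_all)

lemma fg_poly: "poly (map_poly of_int ([:0,1:] * p + q)) (x::real) = x * poly (map_poly of_int p) x + poly (map_poly of_int q) x"
  by (simp only: X_mult mpi_add, simp add: map_poly_pCons)

lemma kFL_lin: "kFL k a b m = a * poly (map_poly of_int (fpol m)) k + b * poly (map_poly of_int (gpol m)) k"
proof (induction m rule: fpol.induct)
  case 1 then show ?case by (simp add: pm_const)
next
  case 2 then show ?case by (simp add: pm_X)
next
  case (3 m) then show ?case by (simp only: kFL.simps fpol.simps gpol.simps fg_poly) (simp add: algebra_simps)
qed

lemma L_eq: "(kFL k a b 1 + kFL k a b (n+1)) - (kFL k a b 0 + kFL k a b n) = a * (Fn n k + 1) + b * (Gn n k + k - 2)"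
  unfolding Fn_def Gn_def Fpol_def Gpol_def by (simp add: kFL_lin mpi_diff pm_X pm_const algebra_simps)

lemma fpol0: "poly (map_poly of_int (fpol m)) (0::real) = (if odd m then 1 else 0)"
  by (induction m rule: fpol.induct) (simp_all only: fpol.simps fg_poly, auto simp: map_poly_pCons)

lemma zero_An: "odd n \<Longrightarrow> (0::real) \<in> An n"
proof -
  assume n: "odd n"
  have "Fn n 0 = poly (map_poly of_int (fpol (Suc n))) 0 - poly (map_poly of_int (fpol n)) (0::real)"
    unfolding Fn_def Fpol_def mpi_diff by (simp only: poly_diff)
  also have "\<dots> = -1" unfolding fpol0 using n by simp
  finally show ?thesis unfolding An_def by simp
qed



lemma lemZ:
  fixes u :: "nat \<Rightarrow> real" and k s :: real
  assumes rec: "\<And>m. u (Suc (Suc m)) = k * u (Suc m) + u m"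
    and k: "k \<noteq> 0" and n: "odd n" and s: "s = 1 \<or> s = -1"
    and un: "u n = s * u 0" and un1: "u (Suc n) = s * u 1"
  shows "u 0 = 0 \<and> u 1 = 0"
proof -
  define Q where "Q m = (u (Suc m))^2 - k * u m * u (Suc m) - (u m)^2" for m
  have Qs: "Q (Suc m) = - Q m" for m
    unfolding Q_def rec by (simp add: power2_eq_square algebra_simps)
  have Qm: "Q m = (-1)^m * Q 0" for m
    by (induction m) (simp_all add: Qs)
  have ss: "s * s = 1" using s by auto
  have "Q n = (s * s) * Q 0" unfolding Q_def un un1 by (simp add: power2_eq_square algebra_simps)
  hence "Q n = Q 0" using ss by simp
  moreover have "Q n = - Q 0" using Qm[of n] n by simp
  ultimately have Q0: "Q 0 = 0" by simp
  show ?thesis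
  proof (cases "u 0 = 0")
    case True
    then show ?thesis using Q0 unfolding Q_def by simp
  next
    case False
    define l where "l = u 1 / u 0"
    have u1: "u 1 = l * u 0" using False l_def by simp
    have l2: "l^2 = k * l + 1"
    proof -
      have "(l * u 0)^2 - k * u 0 * (l * u 0) - (u 0)^2 = 0" using Q0 u1 unfolding Q_def by simp
      hence "(u 0)^2 * (l^2 - k * l - 1) = 0" by (simp add: power2_eq_square algebra_simps)
      thus ?thesis using False by simp
    qed
    have um: "u m = l^m * u 0 \<and> u (Suc m) = l^(Suc m) * u 0" for m
    proof (induction m)
      case 0 then show ?case using u1 by simp
    next
      case (Suc m)
      then have "u (Suc (Suc m)) = l^m * u 0 * (k * l + 1)"
        by (simp add: rec algebra_simps)
      also have "\<dots> = l^m * u 0 * l^2" using l2 by simp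
      also have "\<dots> = l^(Suc (Suc m)) * u 0" by (simp add: power2_eq_square)
      finally show ?case using Suc by simp
    qed
    have "l^n = s" using um[of n] un False by simp
    hence "\<bar>l^n\<bar> = 1" using s by auto
    hence "\<bar>l\<bar>^n = 1" by (simp add: power_abs)
    moreover have "n > 0" using n by (cases n) auto
    ultimately have "\<bar>l\<bar> = 1" using power_eq_imp_eq_base[of "\<bar>l\<bar>" n 1] by simp
    hence "l^2 = 1" using power2_abs[of l] by simp
    hence "k * l = 0" using l2 by simp
    moreover have "l \<noteq> 0" using \<open>\<bar>l\<bar> = 1\<close> by auto
    ultimately show ?thesis using k by simp
  qed
qed

lemma rec_zero:
  fixes u :: "nat \<Rightarrow> real"
  assumes rec: "\<And>m. u (Suc (Suc m)) = k * u (Suc m) + u m" and "u 0 = 0" "u 1 = 0"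
  shows "u m = 0"
proof -
  have "u m = 0 \<and> u (Suc m) = 0" for m
    by (induction m) (use assms in auto)
  thus ?thesis by simp
qed


definition eps :: "int \<Rightarrow> real" where "eps q = (if even q then 1 else -1)"

lemma eps_plus1: "eps (q + 1) = - eps q" unfolding eps_def by auto
lemma eps_minus1: "eps (q - 1) = - eps q" unfolding eps_def by auto

definition Phi :: "nat \<Rightarrow> real \<Rightarrow> real \<Rightarrow> real \<Rightarrow> int \<Rightarrow> real" where
  "Phi n k a b m = eps (m div int n) * kFL k a b (nat (m mod int n) + 1)"

lemma divmod_qr: "0 \<le> r \<Longrightarrow> r < int n \<Longrightarrow> (q * int n + r) div int n = q \<and> (q * int n + r) mod int n = r"
  by (simp add: add.commute)

lemma Phi_qr: "0 \<le> r \<Longrightarrow> r < int n \<Longrightarrow> Phi n k a b (q * int n + r) = eps q * kFL k a b (nat r + 1)"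
  unfolding Phi_def using divmod_qr by simp

lemma Phi_shift: "0 < n \<Longrightarrow> Phi n k a b (m + int n) = - Phi n k a b m"
proof -
  assume n: "0 < n"
  have m: "m = (m div int n) * int n + m mod int n" by simp
  have "m + int n = (m div int n + 1) * int n + m mod int n" by (simp add: algebra_simps)
  hence "Phi n k a b (m + int n) = eps (m div int n + 1) * kFL k a b (nat (m mod int n) + 1)"
    using Phi_qr[of "m mod int n" n k a b "m div int n + 1"] n by simp
  thus ?thesis unfolding Phi_def eps_plus1 by simp
qed

lemma Phi_shift': "0 < n \<Longrightarrow> Phi n k a b (m - int n) = - Phi n k a b m"
  using Phi_shift[of n k a b "m - int n"] by simp

lemma entry: "i < n \<Longrightarrow> j < n \<Longrightarrow> skewA n k a b $$ (i,j) = Phi n k a b (int j - int i)"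
proof -
  assume i: "i < n" and j: "j < n"
  show ?thesis
  proof (cases "i \<le> j")
    case True
    have e: "int j - int i = 0 * int n + int (j - i)" using True by simp
    have "Phi n k a b (int j - int i) = eps 0 * kFL k a b (nat (int (j - i)) + 1)"
      unfolding e by (rule Phi_qr) (use i j in auto)
    hence "Phi n k a b (int j - int i) = kFL k a b (j - i + 1)" by (simp add: eps_def)
    thus ?thesis using True i j unfolding skewA_def by simp
  next
    case False
    have e: "int j - int i = (-1) * int n + int (n + j - i)" using False i by simp
    have "Phi n k a b (int j - int i) = eps (-1) * kFL k a b (nat (int (n + j - i)) + 1)"
      unfolding e by (rule Phi_qr) (use i j False in auto)
    hence "Phi n k a b (int j - int i) = - kFL k a b (n + j - i + 1)" by (simp add: eps_def)
    thus ?thesis using False i j unfolding skewA_def by simp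
  qed
qed

lemma Psi_gen:
  assumes n: "n \<ge> 3"
  shows "Phi n k a b m - k * Phi n k a b (m - 1) - Phi n k a b (m - 2) =
     eps (m div int n) * (if m mod int n = 0 then kFL k a b 1 + kFL k a b (n+1)
        else if m mod int n = 1 then kFL k a b 0 + kFL k a b n else 0)"
proof -
  define q where "q = m div int n"
  define r where "r = m mod int n"
  have m: "m = q * int n + r" unfolding q_def r_def by simp
  have r0: "0 \<le> r" "r < int n" unfolding r_def using n by auto
  have Sn1: "kFL k a b (n+1) = k * kFL k a b n + kFL k a b (n - 1)"
  proof -
    have e: "n + 1 = Suc (Suc (n - 1))" "Suc (n - 1) = n" using n by auto
    show ?thesis by (subst e(1), subst kFL.simps(3), subst e(2), rule refl)
  qed
  consider "r = 0" | "r = 1" | "r \<ge> 2" using r0 by linarith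
  then show ?thesis
  proof cases
    case 1
    have e1: "m - 1 = (q - 1) * int n + (int n - 1)" using m 1 by (simp add: algebra_simps)
    have e2: "m - 2 = (q - 1) * int n + (int n - 2)" using m 1 by (simp add: algebra_simps)
    have "Phi n k a b (m - 1) = - eps q * kFL k a b n"
      unfolding e1 using Phi_qr[of "int n - 1" n k a b "q - 1"] n eps_minus1 by (simp add: nat_diff_distrib)
    moreover have "Phi n k a b (m - 2) = - eps q * kFL k a b (n - 1)"
      unfolding e2 using Phi_qr[of "int n - 2" n k a b "q - 1"] n eps_minus1
      by (simp add: nat_diff_distrib numeral_eq_Suc Suc_diff_Suc)
    moreover have "Phi n k a b m = eps q * kFL k a b 1"
      unfolding m 1 using Phi_qr[of 0 n k a b q] n by simp
    ultimately show ?thesis using 1 Sn1 unfolding q_def[symmetric] r_def[symmetric] by (simp add: algebra_simps)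
  next
    case 2
    have e1: "m - 1 = q * int n + 0" using m 2 by (simp add: algebra_simps)
    have e2: "m - 2 = (q - 1) * int n + (int n - 1)" using m 2 by (simp add: algebra_simps)
    have "Phi n k a b (m - 1) = eps q * kFL k a b 1"
      unfolding e1 using Phi_qr[of 0 n k a b q] n by simp
    moreover have "Phi n k a b (m - 2) = - eps q * kFL k a b n"
      unfolding e2 using Phi_qr[of "int n - 1" n k a b "q - 1"] n eps_minus1 by (simp add: nat_diff_distrib)
    moreover have "Phi n k a b m = eps q * kFL k a b 2"
      unfolding m 2 using Phi_qr[of 1 n k a b q] n by (simp add: numeral_eq_Suc)
    moreover have "kFL k a b 2 = k * kFL k a b 1 + kFL k a b 0" by (simp add: numeral_eq_Suc)
    ultimately show ?thesis using 2 n unfolding q_def[symmetric] r_def[symmetric] by (simp add: algebra_simps)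
  next
    case 3
    have e1: "m - 1 = q * int n + (r - 1)" using m by (simp add: algebra_simps)
    have e2: "m - 2 = q * int n + (r - 2)" using m by (simp add: algebra_simps)
    have "Phi n k a b (m - 1) = eps q * kFL k a b (nat r)"
      unfolding e1 using Phi_qr[of "r - 1" n k a b q] r0 3 by (simp add: nat_diff_distrib)
    moreover have "Phi n k a b (m - 2) = eps q * kFL k a b (nat r - 1)"
      unfolding e2 using Phi_qr[of "r - 2" n k a b q] r0 3 by (simp add: nat_diff_distrib Suc_diff_Suc numeral_eq_Suc)
    moreover have "Phi n k a b m = eps q * kFL k a b (nat r + 1)"
      unfolding m using Phi_qr[of r n k a b q] r0 by simp
    moreover have "kFL k a b (nat r + 1) = k * kFL k a b (nat r) + kFL k a b (nat r - 1)"
    proof -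
      have e: "nat r + 1 = Suc (Suc (nat r - 1))" "Suc (nat r - 1) = nat r" using 3 by auto
      show ?thesis by (subst e(1), subst kFL.simps(3), subst e(2), rule refl)
    qed
    ultimately show ?thesis using 3 unfolding q_def[symmetric] r_def[symmetric] by (simp add: algebra_simps)
  qed
qed

lemma Psi_val:
  assumes n: "n \<ge> 3" and d: "- int n < d" "d < int n"
  shows "Phi n k a b d - k * Phi n k a b (d - 1) - Phi n k a b (d - 2) =
     (if d = 0 then kFL k a b 1 + kFL k a b (n+1)
      else if d = 1 then kFL k a b 0 + kFL k a b n
      else if d = 1 - int n then - (kFL k a b 0 + kFL k a b n) else 0)"
proof (cases "d \<ge> 0")
  case True
  have "d div int n = 0 \<and> d mod int n = d" using divmod_qr[of d n 0] True d by simp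
  thus ?thesis using Psi_gen[OF n, of k a b d] True n by (simp add: eps_def)
next
  case False
  have "d = (-1) * int n + (d + int n)" by simp
  hence "d div int n = -1 \<and> d mod int n = d + int n" using divmod_qr[of "d + int n" n "-1"] False d by simp
  thus ?thesis using Psi_gen[OF n, of k a b d] False n d by (simp add: eps_def)
qed

definition W :: "nat \<Rightarrow> real \<Rightarrow> real \<Rightarrow> real \<Rightarrow> real vec \<Rightarrow> int \<Rightarrow> real" where
  "W n k a b v i = (\<Sum>j<n. Phi n k a b (int j - i) * v $ j)"

definition Cv :: "nat \<Rightarrow> real \<Rightarrow> real \<Rightarrow> real \<Rightarrow> real vec \<Rightarrow> nat \<Rightarrow> real" where
  "Cv n k a b v i = (kFL k a b 1 + kFL k a b (n+1)) * v $ i +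
      (if Suc i < n then (kFL k a b 0 + kFL k a b n) * v $ (Suc i) else - (kFL k a b 0 + kFL k a b n) * v $ 0)"

lemma mult_W: "v \<in> carrier_vec n \<Longrightarrow> i < n \<Longrightarrow> (skewA n k a b *\<^sub>v v) $ i = W n k a b v (int i)"
proof -
  assume v: "v \<in> carrier_vec n" and i: "i < n"
  have "(skewA n k a b *\<^sub>v v) $ i = (\<Sum>j<n. skewA n k a b $$ (i,j) * v $ j)"
    using v i by (simp add: scalar_prod_def atLeast0LessThan skewA_def)
  also have "\<dots> = W n k a b v (int i)" unfolding W_def using i by (intro sum.cong) (simp_all add: entry)
  finally show ?thesis .
qed

lemma W_shift: "0 < n \<Longrightarrow> W n k a b v (i + int n) = - W n k a b v i"
proof -
  assume n: "0 < n"
  have "Phi n k a b (int j - (i + int n)) = - Phi n k a b (int j - i)" for j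
    using Phi_shift'[OF n, of k a b "int j - i"] by (simp add: algebra_simps)
  thus ?thesis unfolding W_def by (simp add: sum_negf)
qed

lemma W_shift': "0 < n \<Longrightarrow> W n k a b v (i - int n) = - W n k a b v i"
  using W_shift[of n k a b v "i - int n"] by simp

lemma R_eq: "W n k a b v i - k * W n k a b v (i+1) - W n k a b v (i+2) =
   (\<Sum>j<n. (Phi n k a b (int j - i) - k * Phi n k a b (int j - i - 1) - Phi n k a b (int j - i - 2)) * v $ j)"
proof -
  have "\<And>j. Phi n k a b (int j - (i+1)) = Phi n k a b (int j - i - 1)"
       "\<And>j. Phi n k a b (int j - (i+2)) = Phi n k a b (int j - i - 2)" by (simp_all add: algebra_simps)
  thus ?thesis unfolding W_def by (simp add: sum_subtractf sum_distrib_left algebra_simps)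
qed

lemma R_C:
  assumes n: "n \<ge> 3" and i: "i < n"
  shows "W n k a b v (int i) - k * W n k a b v (int i+1) - W n k a b v (int i+2) = Cv n k a b v i"
proof -
  define c0 where "c0 = kFL k a b 1 + kFL k a b (n+1)"
  define c1 where "c1 = kFL k a b 0 + kFL k a b n"
  have pt: "(Phi n k a b (int j - int i) - k * Phi n k a b (int j - int i - 1) - Phi n k a b (int j - int i - 2)) * v $ j
     = (if j = i then c0 * v $ j else 0) + (if j = Suc i then c1 * v $ j else 0)
       + (if Suc i = n then (if j = 0 then - c1 * v $ j else 0) else 0)" if j: "j < n" for j
  proof -
    have h: "Phi n k a b (int j - int i) - k * Phi n k a b (int j - int i - 1) - Phi n k a b (int j - int i - 2) =
     (if int j - int i = 0 then c0 else if int j - int i = 1 then c1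
      else if int j - int i = 1 - int n then - c1 else 0)"
      unfolding c0_def c1_def using Psi_val[OF n, of "int j - int i" k a b] i j by simp
    have e1: "(int j - int i = 0) = (j = i)" by auto
    have e2: "(int j - int i = 1) = (j = Suc i)" by auto
    have e3: "(int j - int i = 1 - int n) = (Suc i = n \<and> j = 0)" using i j by auto
    show ?thesis unfolding h e1 e2 e3 using n by auto
  qed
  have "W n k a b v (int i) - k * W n k a b v (int i+1) - W n k a b v (int i+2) =
     (\<Sum>j<n. (if j = i then c0 * v $ j else 0) + (if j = Suc i then c1 * v $ j else 0)
       + (if Suc i = n then (if j = 0 then - c1 * v $ j else 0) else 0))"
    unfolding R_eq by (rule sum.cong) (simp_all add: pt)
  also have "\<dots> = c0 * v $ i + (if Suc i < n then c1 * v $ (Suc i) else 0) + (if Suc i = n then - c1 * v $ 0 else 0)"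
    using i n by (simp add: sum.distrib)
  also have "\<dots> = Cv n k a b v i" unfolding Cv_def c0_def[symmetric] c1_def[symmetric] using i by auto
  finally show ?thesis .
qed

lemma K1:
  assumes n: "n \<ge> 3" and v: "v \<in> carrier_vec n" and Av: "skewA n k a b *\<^sub>v v = 0\<^sub>v n" and i: "i < n"
  shows "Cv n k a b v i = 0"
proof -
  have W0: "W n k a b v (int j) = 0" if "j < n" for j
    using mult_W[OF v that, of k a b] Av that by simp
  have Wz: "W n k a b v (int j) = 0" if "j < n + 2" for j
  proof (cases "j < n")
    case True then show ?thesis using W0 by simp
  next
    case False
    have "W n k a b v (int j) = - W n k a b v (int j - int n)" using W_shift'[of n k a b v "int j"] n by simp
    also have "int j - int n = int (j - n)" using False by simp
    also have "W n k a b v (int (j - n)) = 0" using W0 that n by simp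
    finally show ?thesis by simp
  qed
  have "Cv n k a b v i = W n k a b v (int i) - k * W n k a b v (int (Suc i)) - W n k a b v (int (Suc (Suc i)))"
    using R_C[OF n i, of k a b v] by (simp add: algebra_simps)
  thus ?thesis using Wz[of i] Wz[of "Suc i"] Wz[of "Suc (Suc i)"] i by simp
qed

lemma K2:
  assumes n: "n \<ge> 3" "odd n" and k: "k \<noteq> 0" and v: "v \<in> carrier_vec n" and C: "\<And>i. i < n \<Longrightarrow> Cv n k a b v i = 0"
  shows "skewA n k a b *\<^sub>v v = 0\<^sub>v n"
proof -
  define R where "R i = W n k a b v i - k * W n k a b v (i+1) - W n k a b v (i+2)" for i
  have n0: "0 < n" using n by simp
  have Rs: "R (i + int n) = - R i" for i
  proof -
    have "R (i + int n) = W n k a b v (i + int n) - k * W n k a b v ((i+1) + int n) - W n k a b v ((i+2) + int n)"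
      unfolding R_def by (simp only: ac_simps)
    also have "\<dots> = - R i" unfolding R_def W_shift[OF n0] by simp
    finally show ?thesis .
  qed
  have R0: "R (int m) = 0" for m
  proof (induction m rule: less_induct)
    case (less m)
    show ?case
    proof (cases "m < n")
      case True then show ?thesis using R_C[OF n(1) True, of k a b v] C unfolding R_def by simp
    next
      case False
      have "R (int m) = R (int (m - n) + int n)" using False by simp
      also have "\<dots> = - R (int (m - n))" by (rule Rs)
      also have "R (int (m - n)) = 0" by (rule less.IH) (use False n0 in simp)
      finally show ?thesis by simp
    qed
  qed
  define u where "u m = (-1)^m * W n k a b v (int m)" for m
  have rec: "u (Suc (Suc m)) = k * u (Suc m) + u m" for m
  proof -
    have "W n k a b v (int m + 2) = W n k a b v (int m) - k * W n k a b v (int m + 1)"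
      using R0[of m] unfolding R_def by simp
    hence h: "W n k a b v (int m + 2) = W n k a b v (int m) - k * W n k a b v (int m + 1)" by (simp add: ac_simps)
    have e: "int (Suc (Suc m)) = int m + 2" "int (Suc m) = int m + 1" by simp_all
    have "u (Suc (Suc m)) = (-1)^m * W n k a b v (int m + 2)" unfolding u_def e by simp
    moreover have "u (Suc m) = - ((-1)^m * W n k a b v (int m + 1))" unfolding u_def e by simp
    ultimately show ?thesis unfolding h u_def[of m] by (simp add: algebra_simps)
  qed
  have un: "u n = 1 * u 0"
    using W_shift[OF n0, of k a b v 0] n(2) unfolding u_def by simp
  have un1: "u (Suc n) = 1 * u 1"
    using W_shift[OF n0, of k a b v 1] n(2) unfolding u_def by (simp add: add.commute)
  have "u 0 = 0 \<and> u 1 = 0" using lemZ[OF rec k n(2) _ un un1] by simp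
  hence uz: "u m = 0" for m using rec_zero[of u k m] rec by simp
  show ?thesis
  proof (rule eq_vecI)
    fix i assume "i < dim_vec (0\<^sub>v n :: real vec)"
    hence i: "i < n" by simp
    have "W n k a b v (int i) = 0" using uz[of i] unfolding u_def by simp
    thus "(skewA n k a b *\<^sub>v v) $ i = 0\<^sub>v n $ i" using mult_W[OF v i] i by simp
  qed (simp add: skewA_def)
qed



lemma C1:
  fixes x :: "nat \<Rightarrow> real"
  assumes H: "\<And>i. i < n \<Longrightarrow> c0 * x i + (if Suc i < n then c1 * x (Suc i) else - c1 * x 0) = 0"
    and nz: "c0 \<noteq> 0 \<or> c1 \<noteq> 0" and x0: "x 0 = 0" and i: "i < n"
  shows "x i = 0"
proof (cases "c1 = 0")
  case True
  then have "c0 \<noteq> 0" using nz by simp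
  then show ?thesis using H[OF i] True by (simp split: if_splits)
next
  case False
  show ?thesis using i
  proof (induction i)
    case 0 then show ?case using x0 by simp
  next
    case (Suc i)
    then have "c0 * x i + c1 * x (Suc i) = 0" using H[of i] by simp
    then show ?case using Suc False by simp
  qed
qed

lemma odd_pow_neg1: "odd n \<Longrightarrow> (t::real)^n = -1 \<Longrightarrow> t = -1"
proof -
  assume n: "odd n" and t: "t^n = -1"
  have "\<bar>t^n\<bar> = 1" using t by simp
  hence "\<bar>t\<bar>^n = 1" by (simp add: power_abs)
  moreover have "n > 0" using n by (cases n) auto
  ultimately have "\<bar>t\<bar> = 1" using power_eq_imp_eq_base[of "\<bar>t\<bar>" n 1] by simp
  moreover have "t \<noteq> 1" using t by auto
  ultimately show ?thesis by auto
qed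

lemma C2:
  fixes x :: "nat \<Rightarrow> real"
  assumes H: "\<And>i. i < n \<Longrightarrow> c0 * x i + (if Suc i < n then c1 * x (Suc i) else - c1 * x 0) = 0"
    and ne: "c0 \<noteq> c1" and n: "odd n" and i: "i < n"
  shows "x i = 0"
proof (cases "c1 = 0")
  case True
  then have "c0 \<noteq> 0" using ne by simp
  then show ?thesis using H[OF i] True by (simp split: if_splits)
next
  case False
  define t where "t = - c0 / c1"
  have xt: "x j = t^j * x 0" if "j < n" for j
    using that
  proof (induction j)
    case 0 then show ?case by simp
  next
    case (Suc j)
    then have "c0 * x j + c1 * x (Suc j) = 0" using H[of j] by simp
    then have "x (Suc j) = t * x j" using False unfolding t_def by (simp add: field_simps)
    then show ?case using Suc by simp
  qed
  have n0: "n > 0" using n by (cases n) auto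
  have "c0 * x (n - 1) - c1 * x 0 = 0" using H[of "n - 1"] n0 by simp
  hence "c0 * t^(n-1) * x 0 - c1 * x 0 = 0" using xt[of "n - 1"] n0 by simp
  moreover have "c0 = - t * c1" unfolding t_def using False by simp
  ultimately have "- c1 * (t * t^(n-1) + 1) * x 0 = 0" by (simp add: algebra_simps)
  moreover have "t * t^(n-1) = t^n" using n0 by (cases n) simp_all
  ultimately have "(t^n + 1) * x 0 = 0" using False by simp
  moreover have "t^n \<noteq> -1"
  proof
    assume "t^n = -1"
    hence "t = -1" using odd_pow_neg1 n by simp
    hence "c0 = c1" unfolding t_def using False by (simp add: field_simps)
    thus False using ne by simp
  qed
  ultimately have "x 0 = 0" by simp
  thus ?thesis using xt[OF i] by simp
qed

lemma C3:
  fixes c :: real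
  assumes n: "odd n" and i: "i < n"
  shows "c * (-1)^i + (if Suc i < n then c * (-1)^(Suc i) else - c * (-1)^0) = 0"
proof (cases "Suc i < n")
  case True then show ?thesis by simp
next
  case False
  then have "i = n - 1" using i by simp
  then have "even i" using n i by (metis One_nat_def even_Suc Suc_pred gr0I less_nat_zero_code not_less0 odd_pos)
  then show ?thesis using False by simp
qed



lemma skewA_carrier: "skewA n k a b \<in> carrier_mat n n" unfolding skewA_def by simp

lemma nz_c:
  assumes n: "odd n" and k: "k \<noteq> 0" and ab: "\<not> (a = 0 \<and> b = 0)"
  shows "kFL k a b 1 + kFL k a b (n+1) \<noteq> 0 \<or> kFL k a b 0 + kFL k a b n \<noteq> 0"
proof (rule ccontr)
  assume "\<not> ?thesis"
  hence c0: "kFL k a b 1 + kFL k a b (n+1) = 0" and c1: "kFL k a b 0 + kFL k a b n = 0" by auto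
  have "kFL k a b 0 = 0 \<and> kFL k a b 1 = 0"
    by (rule lemZ[of "kFL k a b" k n "-1"]) (use k n c0 c1 in auto)
  thus False using ab by auto
qed

lemma rank_n_iff:
  assumes n: "n \<ge> 3" "odd n" and k: "k \<noteq> 0"
  shows "matrank n (skewA n k a b) = n \<longleftrightarrow> kFL k a b 1 + kFL k a b (n+1) \<noteq> kFL k a b 0 + kFL k a b n"
proof -
  let ?A = "skewA n k a b"
  let ?c0 = "kFL k a b 1 + kFL k a b (n+1)" and ?c1 = "kFL k a b 0 + kFL k a b n"
  have r: "matrank n ?A = n \<longleftrightarrow> det ?A \<noteq> 0"
    unfolding matrank_def using vec_space.det_rank_iff[OF skewA_carrier] by simp
  show ?thesis
  proof
    assume "matrank n ?A = n"
    hence d: "det ?A \<noteq> 0" using r by simp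
    show "?c0 \<noteq> ?c1"
    proof
      assume eq: "?c0 = ?c1"
      define v where "v = vec n (\<lambda>i. (-1::real)^i)"
      have v: "v \<in> carrier_vec n" unfolding v_def by simp
      have "Cv n k a b v i = 0" if "i < n" for i
        using C3[OF n(2) that, of ?c0] that eq unfolding Cv_def v_def by (auto simp: n)
      hence "?A *\<^sub>v v = 0\<^sub>v n" using K2[OF n k v] by blast
      moreover have "v \<noteq> 0\<^sub>v n"
      proof
        assume "v = 0\<^sub>v n"
        hence "v $ 0 = 0" using n by simp
        thus False unfolding v_def using n by simp
      qed
      ultimately have "det ?A = 0" using det_0_iff_vec_prod_zero_field[OF skewA_carrier] v by blast
      thus False using d by simp
    qed
  next
    assume ne: "?c0 \<noteq> ?c1"
    have "det ?A \<noteq> 0"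
    proof
      assume "det ?A = 0"
      then obtain v where v: "v \<in> carrier_vec n" "v \<noteq> 0\<^sub>v n" "?A *\<^sub>v v = 0\<^sub>v n"
        using det_0_iff_vec_prod_zero_field[OF skewA_carrier] by blast
      have C: "?c0 * v $ i + (if Suc i < n then ?c1 * v $ (Suc i) else - ?c1 * v $ 0) = 0" if "i < n" for i
        using K1[OF n(1) v(1) v(3) that] unfolding Cv_def by simp
      have "v $ i = 0" if "i < n" for i
        using C2[of n ?c0 "\<lambda>i. v $ i" ?c1 i] C ne n(2) that by blast
      hence "v = 0\<^sub>v n" using v(1) by (intro eq_vecI) auto
      thus False using v(2) by simp
    qed
    thus "matrank n ?A = n" using r by simp
  qed
qed

lemma rank_ge:
  assumes n: "n \<ge> 3" "odd n" and k: "k \<noteq> 0" and ab: "\<not> (a = 0 \<and> b = 0)"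
  shows "matrank n (skewA n k a b) \<ge> n - 1"
proof -
  let ?A = "skewA n k a b"
  let ?c0 = "kFL k a b 1 + kFL k a b (n+1)" and ?c1 = "kFL k a b 0 + kFL k a b n"
  define B where "B = mat n (n-1) (\<lambda>(i,j). ?A $$ (i, Suc j))"
  have Bc: "B \<in> carrier_mat n (n-1)" unfolding B_def by simp
  have inj: "w = 0\<^sub>v (n-1)" if w: "w \<in> carrier_vec (n-1)" "B *\<^sub>v w = 0\<^sub>v n" for w
  proof -
    define v where "v = vec n (\<lambda>i. if i = 0 then 0 else w $ (i - 1))"
    have v: "v \<in> carrier_vec n" unfolding v_def by simp
    have nS: "n = Suc (n - 1)" using n by simp
    have Av: "?A *\<^sub>v v = 0\<^sub>v n"
    proof (rule eq_vecI)
      fix i assume "i < dim_vec (0\<^sub>v n :: real vec)"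
      hence i: "i < n" by simp
      have "(?A *\<^sub>v v) $ i = (\<Sum>j<n. ?A $$ (i,j) * v $ j)"
        using v i by (simp add: scalar_prod_def atLeast0LessThan skewA_def)
      also have "\<dots> = (\<Sum>j<Suc (n-1). ?A $$ (i,j) * v $ j)" using nS by simp
      also have "\<dots> = (\<Sum>j<n-1. ?A $$ (i,Suc j) * w $ j)"
        unfolding sum.lessThan_Suc_shift using nS by (auto simp: v_def intro!: sum.cong)
      also have "\<dots> = (B *\<^sub>v w) $ i"
        using w(1) i by (simp add: scalar_prod_def atLeast0LessThan B_def)
      finally show "(?A *\<^sub>v v) $ i = 0\<^sub>v n $ i" using w(2) i by simp
    qed (simp add: skewA_def)
    have C: "?c0 * v $ i + (if Suc i < n then ?c1 * v $ (Suc i) else - ?c1 * v $ 0) = 0" if "i < n" for i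
      using K1[OF n(1) v Av that] unfolding Cv_def by simp
    have "v $ i = 0" if "i < n" for i
      using C1[of n ?c0 "\<lambda>i. v $ i" ?c1 i] C nz_c[OF n(2) k ab] that n by (simp add: v_def)
    hence vz: "v $ Suc j = 0" if "j < n - 1" for j using that by simp
    have "w $ j = 0" if "j < n - 1" for j using vz[OF that] that by (simp add: v_def)
    thus ?thesis using w(1) by (intro eq_vecI) auto
  qed
  have colB: "col B j = col ?A (Suc j)" if "j < n - 1" for j
    using that unfolding B_def by (intro eq_vecI) (auto simp: skewA_def)
  have dist: "distinct (cols B)"
  proof (rule ccontr)
    assume "\<not> distinct (cols B)"
    then obtain i j where ij: "i \<noteq> j" "i < n - 1" "j < n - 1" "col B i = col B j"
      using Bc by (auto simp: distinct_conv_nth)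
    define w where "w = vec (n-1) (\<lambda>l. if l = i then 1 else if l = j then -1 else (0::real))"
    have w: "w \<in> carrier_vec (n-1)" unfolding w_def by simp
    have "B *\<^sub>v w = 0\<^sub>v n"
    proof (rule eq_vecI)
      fix r assume "r < dim_vec (0\<^sub>v n :: real vec)"
      hence r: "r < n" by simp
      have "(B *\<^sub>v w) $ r = (\<Sum>l<n-1. B $$ (r,l) * w $ l)"
        using w r Bc by (simp add: scalar_prod_def atLeast0LessThan)
      also have "\<dots> = (\<Sum>l<n-1. (if l = i then B $$ (r,l) else 0) + (if l = j then - B $$ (r,l) else 0))"
        by (intro sum.cong) (auto simp: w_def ij(1))
      also have "\<dots> = B $$ (r,i) - B $$ (r,j)" using ij by (simp add: sum.distrib)
      also have "\<dots> = col B i $ r - col B j $ r" using r ij(1-3) Bc by simp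
      finally show "(B *\<^sub>v w) $ r = 0\<^sub>v n $ r" using ij(4) r by simp
    qed (use Bc in simp)
    hence "w = 0\<^sub>v (n-1)" using inj w by blast
    hence "w $ i = 0" using ij by simp
    thus False unfolding w_def using ij by simp
  qed
  have indep: "\<not> module.lin_dep class_ring (module_vec TYPE(real) n) (set (cols B))"
  proof
    assume "module.lin_dep class_ring (module_vec TYPE(real) n) (set (cols B))"
    then obtain w where "w \<in> carrier_vec (n-1)" "w \<noteq> 0\<^sub>v (n-1)" "B *\<^sub>v w = 0\<^sub>v n"
      using vec_space.lin_depE[OF Bc _ dist] by blast
    thus False using inj by blast
  qed
  have sub: "set (cols B) \<subseteq> set (cols ?A)"
  proof
    fix x assume "x \<in> set (cols B)"
    then obtain j where j: "j < n - 1" "x = col B j" using Bc by (auto simp: cols_def)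
    hence "x = col ?A (Suc j)" using colB by simp
    moreover have "Suc j < n" using j by simp
    ultimately show "x \<in> set (cols ?A)" using skewA_carrier[of n k a b] by (auto simp: cols_def)
  qed
  have "card (set (cols B)) = n - 1" using dist Bc by (simp add: distinct_card)
  thus ?thesis unfolding matrank_def
    using vec_space.rank_ge_card_indpt[OF skewA_carrier sub indep] by simp
qed



lemma alg:
  fixes al be a b :: real
  assumes al: "al \<noteq> 0" and be: "be \<noteq> 0"
  shows "(a * al + b * be = 0 \<and> 4 * a^3 + 27 * b^2 = 0 \<and> \<not> (a = 0 \<and> b = 0)) \<longleftrightarrow>
         (a = - (27 * al^2) / (4 * be^2) \<and> b = (27 * al^3) / (4 * be^3))"
proof
  assume h: "a * al + b * be = 0 \<and> 4 * a^3 + 27 * b^2 = 0 \<and> \<not> (a = 0 \<and> b = 0)"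
  hence bb: "b = - a * al / be" using be by (simp add: field_simps)
  have a0: "a \<noteq> 0" using h bb by auto
  have "4 * a^3 + 27 * (a * al / be)^2 = 0" using h bb by (simp add: power2_eq_square)
  hence "a^2 * (4 * a + 27 * al^2 / be^2) = 0" by (simp add: power2_eq_square power3_eq_cube field_simps)
  hence "4 * a + 27 * al^2 / be^2 = 0" using a0 by simp
  hence aa: "a = - (27 * al^2) / (4 * be^2)" by (simp add: field_simps)
  have "b = (27 * al^3) / (4 * be^3)" unfolding bb aa using be by (simp add: field_simps power2_eq_square power3_eq_cube)
  thus "a = - (27 * al^2) / (4 * be^2) \<and> b = (27 * al^3) / (4 * be^3)" using aa by simp
next
  assume h: "a = - (27 * al^2) / (4 * be^2) \<and> b = (27 * al^3) / (4 * be^3)"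
  hence ha: "a = - (27 * al^2) / (4 * be^2)" and hb: "b = (27 * al^3) / (4 * be^3)" by auto
  have "a * al + b * be = 0" unfolding ha hb using be by (simp add: field_simps power2_eq_square power3_eq_cube)
  moreover have "4 * a^3 + 27 * b^2 = 0" unfolding ha hb using be by (simp add: field_simps power2_eq_square power3_eq_cube)
  moreover have "a \<noteq> 0" using h al be by simp
  ultimately show "a * al + b * be = 0 \<and> 4 * a^3 + 27 * b^2 = 0 \<and> \<not> (a = 0 \<and> b = 0)" by simp
qed



theorem theorem4p11:
  fixes n :: nat
  assumes "odd n" and "n \<ge> 3"
  shows "Sset n (n - 1) = {(k, a1 n k, b1 n k) | k. k \<notin> An n}
    \<and> finite {(k,a,b) \<in> Sset n (n - 1). matrank n (skewA n k a b) \<noteq> n - 1}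
    \<and> (\<forall>r. 1 \<le> r \<and> r \<le> n - 2 \<longrightarrow>
           finite {(k,a,b) \<in> Sset n (n - 1). matrank n (skewA n k a b) = r})"
proof -
  note on = assms(1) and n3 = assms(2)
  have mem: "(k,a,b) \<in> Sset n r \<longleftrightarrow> k \<notin> An n \<and> k \<noteq> 0 \<and> matrank n (skewA n k a b) \<le> r
       \<and> 4 * a^3 + 27 * b^2 = 0 \<and> \<not> (a = 0 \<and> b = 0)" for k a b r
    unfolding Sset_def by auto
  have key: "(k,a,b) \<in> Sset n (n-1) \<longleftrightarrow> k \<notin> An n \<and> a = a1 n k \<and> b = b1 n k" for k a b
  proof (cases "k \<in> An n")
    case True then show ?thesis using mem by auto
  next
    case False
    have k0: "k \<noteq> 0" using False zero_An[OF on] by auto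
    have al: "Fn n k + 1 \<noteq> 0" and be: "Gn n k + k - 2 \<noteq> 0" using False unfolding An_def by auto
    have le: "matrank n (skewA n k a b) \<le> n" unfolding matrank_def
      using vec_space.rank_le_nc[OF skewA_carrier] by blast
    have "matrank n (skewA n k a b) \<le> n - 1 \<longleftrightarrow> matrank n (skewA n k a b) \<noteq> n" using le n3 by auto
    also have "\<dots> \<longleftrightarrow> kFL k a b 1 + kFL k a b (n+1) = kFL k a b 0 + kFL k a b n"
      using rank_n_iff[OF n3 on k0] by simp
    also have "\<dots> \<longleftrightarrow> a * (Fn n k + 1) + b * (Gn n k + k - 2) = 0"
      using L_eq[of k a b n] by linarith
    finally have rk: "matrank n (skewA n k a b) \<le> n - 1 \<longleftrightarrow> a * (Fn n k + 1) + b * (Gn n k + k - 2) = 0" .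
    show ?thesis using mem[of k a b "n-1"] rk alg[OF al be, of a b] False k0
      unfolding a1_def b1_def by auto
  qed
  have rk: "matrank n (skewA n k a b) = n - 1" if "(k,a,b) \<in> Sset n (n-1)" for k a b
    using mem[of k a b "n-1"] that rank_ge[OF n3 on, of k a b] by auto
  have A: "Sset n (n - 1) = {(k, a1 n k, b1 n k) | k. k \<notin> An n}"
  proof -
    have "x \<in> Sset n (n - 1) \<longleftrightarrow> x \<in> {(k, a1 n k, b1 n k) | k. k \<notin> An n}" for x
    proof -
      obtain k a b where x: "x = (k,a,b)" by (cases x) auto
      show ?thesis unfolding x key by auto
    qed
    thus ?thesis by blast
  qed
  have B: "{(k,a,b) \<in> Sset n (n - 1). matrank n (skewA n k a b) \<noteq> n - 1} = {}"
    using rk by auto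
  have C: "{(k,a,b) \<in> Sset n (n - 1). matrank n (skewA n k a b) = r} = {}" if "r \<le> n - 2" for r
    using rk that n3 by auto
  have fB: "finite {(k,a,b) \<in> Sset n (n - 1). matrank n (skewA n k a b) \<noteq> n - 1}"
    by (simp only: B finite.emptyI)
  have fC: "\<forall>r. 1 \<le> r \<and> r \<le> n - 2 \<longrightarrow>
           finite {(k,a,b) \<in> Sset n (n - 1). matrank n (skewA n k a b) = r}"
  proof (intro allI impI)
    fix r :: nat assume "1 \<le> r \<and> r \<le> n - 2"
    hence "{(k,a,b) \<in> Sset n (n - 1). matrank n (skewA n k a b) = r} = {}" using C by blast
    thus "finite {(k,a,b) \<in> Sset n (n - 1). matrank n (skewA n k a b) = r}" by (simp only: finite.emptyI)
  qed
  show ?thesis using A fB fC by (intro conjI)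
qed


end
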